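(* Every eigenfunction of $K$ (in particular each of the functions $\phi_1,\phi_2,\phi_3,\ldots$) is continuous on $[0,1]$.
   Context: Let $K:[0,1]\times[0,1]\to\mathbb R$ be defined by $K(x,y)=\frac12-\{(xy)^{-1}\}$ if $0<x,y\le 1$, and $K(x,y)=0$ if $0\le x,y\le1$ and $xy=0$, where $\{\alpha\}=\alpha-\lfloor\alpha\rfloor$. Let $L^2([0,1])$ denote the space of real-valued Lebesgue measurable square-integrable functions on $[0,1]$, with $\langle f,g\rangle=\int_0^1 f(x)g(x)\,dx$ and $\|f\|=\langle f,f\rangle^{1/2}$. A function $\phi$ is an eigenfunction of $K$ (with eigenvalue $\lambda\in\mathbb R$) if $\phi\in L^2([0,1])$, $\|\phi\|>0$, and $\phi(x)=\lambda\int_0^1 K(x,y)\phi(y)\,dy$ for every $x\in[0,1]$. Let $\phi_1,\phi_2,\ldots$ be a maximal orthonormal system in $L^2([0,1])$ of eigenfunctions of $K$, $\phi_j$ having the nonzero real eigenvalue $\lambda_j$, numbered so that $0<|\lambda_1|\le|\lambda_2|\le\cdots$ and $\lambda_j\ge\lambda_{j+1}$ whenever $|\lambda_j|=|\lambda_{j+1}|$. *)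

theory Defs
  imports "HOL-Analysis.Analysis"
begin

definition Kker :: "real \<Rightarrow> real \<Rightarrow> real" where
  "Kker x y = (if x * y = 0 then 0 else 1/2 - frac (1 / (x * y)))"

definition L2_01 :: "(real \<Rightarrow> real) \<Rightarrow> bool" where
  "L2_01 f \<longleftrightarrow> set_borel_measurable lebesgue {0..1} f \<and>
                 set_integrable lebesgue {0..1} (\<lambda>x. (f x)^2)"

definition L2_norm01 :: "(real \<Rightarrow> real) \<Rightarrow> real" where
  "L2_norm01 f = sqrt (LINT x:{0..1}|lebesgue. (f x)^2)"

definition eigenfunction_K :: "(real \<Rightarrow> real) \<Rightarrow> real \<Rightarrow> bool" where
  "eigenfunction_K phi lam \<longleftrightarrow> L2_01 phi \<and> L2_norm01 phi > 0 \<and>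
     (\<forall>x\<in>{0..1}. phi x = lam * (LINT y:{0..1}|lebesgue. Kker x y * phi y))"

end

theory Submission
  imports Defs
begin


definition Pf :: "real \<Rightarrow> real" where "Pf t = (frac t - (frac t)^2)/2"

lemma Pf_bound: "\<bar>Pf t\<bar> \<le> 1/8"
proof -
  have "0 \<le> frac t" "frac t < 1" by (auto simp: frac_lt_1)
  then have "0 \<le> frac t - (frac t)^2" by (simp add: power2_eq_square mult_left_le)
  moreover have "frac t - (frac t)^2 = 1/4 - (frac t - 1/2)^2" by (simp add: power2_eq_square algebra_simps)
  moreover have "0 \<le> (frac t - 1/2)^2" by simp
  ultimately have "0 \<le> frac t - (frac t)^2" "frac t - (frac t)^2 \<le> 1/4" by linarith+
  then show ?thesis unfolding Pf_def by (simp add: abs_if)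
qed

lemma frac_near:
  fixes t :: real assumes "t \<notin> \<int>"
  shows "\<forall>\<^sub>F y in nhds t. frac y = y - of_int \<lfloor>t\<rfloor>"
proof -
  have "\<forall>\<^sub>F y in at t. \<lfloor>y\<rfloor> = \<lfloor>t\<rfloor>"
    by (rule eventually_floor_eq[OF tendsto_ident_at assms])
  then show ?thesis unfolding eventually_at_filter frac_def
    by eventually_elim auto
qed

lemma Pf_deriv:
  fixes t :: real assumes "t \<notin> \<int>"
  shows "(Pf has_real_derivative (1/2 - frac t)) (at t)"
proof -
  define n where "n = real_of_int \<lfloor>t\<rfloor>"
  have ev: "\<forall>\<^sub>F y in nhds t. Pf y = ((y - n) - (y - n)^2)/2"
    using frac_near[OF assms] unfolding Pf_def n_def by eventually_elim simp
  have "((\<lambda>y. ((y - n) - (y - n)^2)/2) has_real_derivative ((1 - 2*(t-n))/2)) (at t)"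
    by (auto intro!: derivative_eq_intros simp: field_simps)
  moreover have "(1 - 2*(t-n))/2 = 1/2 - frac t" unfolding n_def frac_def by simp
  ultimately have "((\<lambda>y. ((y - n) - (y - n)^2)/2) has_real_derivative (1/2 - frac t)) (at t)" by metis
  then show ?thesis
    using DERIV_cong_ev[OF refl ev refl] by simp
qed

lemma Pf_cont: "isCont Pf t"
proof (cases "t \<in> \<int>")
  case False
  then show ?thesis using Pf_deriv DERIV_isCont by blast
next
  case True
  then obtain m where m: "t = of_int m" by (auto elim: Ints_cases)
  have "frac t = 0" using True by simp
  then have Pt: "Pf t = 0" unfolding Pf_def by (simp del: frac_eq_0_iff)
  have r: "continuous (at_right t) Pf"
  proof -
    have ev: "\<forall>\<^sub>F y in at_right t. Pf y = ((y - t) - (y - t)^2)/2"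
      unfolding eventually_at_right_field
    proof (intro exI[of _ "t+1"] conjI allI impI)
      fix y assume y: "t < y" "y < t + 1"
      have "frac y = y - t" unfolding frac_unique_iff using y m by auto
      then show "Pf y = ((y - t) - (y - t)^2)/2" unfolding Pf_def by simp
    qed simp
    have "((\<lambda>y. ((y - t) - (y - t)^2)/2) \<longlongrightarrow> ((t - t) - (t - t)^2)/2) (at_right t)"
      by (intro tendsto_intros) auto
    then have "((\<lambda>y. ((y - t) - (y - t)^2)/2) \<longlongrightarrow> Pf t) (at_right t)" using Pt by simp
    then show ?thesis unfolding continuous_within
      using Lim_transform_eventually[OF _ ev[THEN eventually_mono, of "\<lambda>y. ((y - t) - (y - t)^2)/2 = Pf y"]] by auto
  qed
  have l: "continuous (at_left t) Pf"
  proof -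
    have ev: "\<forall>\<^sub>F y in at_left t. Pf y = ((y - t + 1) - (y - t + 1)^2)/2"
      unfolding eventually_at_left_field
    proof (intro exI[of _ "t-1"] conjI allI impI)
      fix y assume y: "t - 1 < y" "y < t"
      have "y - (y - t + 1) \<in> \<int>" using m by simp
      then have "frac y = y - t + 1" unfolding frac_unique_iff using y by simp
      then show "Pf y = ((y - t + 1) - (y - t + 1)^2)/2" unfolding Pf_def by simp
    qed simp
    have "((\<lambda>y. ((y - t + 1) - (y - t + 1)^2)/2) \<longlongrightarrow> ((t - t + 1) - (t - t + 1)^2)/2) (at_left t)"
      by (intro tendsto_intros) auto
    then have "((\<lambda>y. ((y - t + 1) - (y - t + 1)^2)/2) \<longlongrightarrow> Pf t) (at_left t)" using Pt by simp
    then show ?thesis unfolding continuous_within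
      using Lim_transform_eventually[OF _ ev[THEN eventually_mono, of "\<lambda>y. ((y - t + 1) - (y - t + 1)^2)/2 = Pf y"]] by auto
  qed
  show ?thesis using continuous_at_split l r by blast
qed



lemma finite_int_pts:
  fixes a x :: real
  assumes "0 < a" "0 < x"
  shows "finite {y \<in> {a..1}. 1/(x*y) \<in> \<int>}"
proof -
  have "{y \<in> {a..1}. 1/(x*y) \<in> \<int>} \<subseteq> (\<lambda>n. 1/(x * real_of_int n)) ` {0..\<lceil>1/(x*a)\<rceil>}"
  proof
    fix y assume y: "y \<in> {y \<in> {a..1}. 1/(x*y) \<in> \<int>}"
    then obtain n where n: "1/(x*y) = of_int n" by (auto elim: Ints_cases)
    have ypos: "y > 0" using y assms by auto
    have "1/(x*y) \<le> 1/(x*a)" using y assms by (intro divide_left_mono mult_left_mono mult_pos_pos) auto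
    then have "n \<le> \<lceil>1/(x*a)\<rceil>" using n by linarith
    moreover have "0 \<le> n"
    proof -
      have "(0::real) < 1/(x*y)" using ypos assms by simp
      then show ?thesis using n by simp
    qed
    moreover have "y = 1/(x * real_of_int n)"
    proof -
      have "1/(x * real_of_int n) = 1/(x * (1/(x*y)))" by (simp add: n)
      also have "\<dots> = y" using ypos assms by simp
      finally show ?thesis by simp
    qed
    ultimately show "y \<in> (\<lambda>n. 1/(x * real_of_int n)) ` {0..\<lceil>1/(x*a)\<rceil>}" by auto
  qed
  then show ?thesis by (rule finite_subset) auto
qed

lemma RL:
  fixes p p' :: "real \<Rightarrow> real"
  assumes deriv: "\<And>y. (p has_real_derivative p' y) (at y)"
    and pc: "continuous_on {a..1} p'" and a: "0 < a" "a \<le> 1"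
  shows "\<exists>C. \<forall>x\<in>{0<..1}. \<bar>integral {a..1} (\<lambda>y. (1/2 - frac (1/(x*y))) * p y)\<bar> \<le> x * C"
proof -
  define w where "w y = y^2 * p y" for y
  define w' where "w' y = 2*y*p y + y^2 * p' y" for y
  have wd: "(w has_real_derivative w' y) (at y)" for y
    unfolding w_def w'_def by (auto intro!: derivative_eq_intros deriv)
  have pcont: "continuous_on {a..1} p"
    using deriv by (meson DERIV_isCont continuous_at_imp_continuous_on)
  have w'c: "continuous_on {a..1} w'"
    unfolding w'_def by (intro continuous_intros pc pcont)
  have wc: "continuous_on {a..1} w"
    using wd by (meson DERIV_isCont continuous_at_imp_continuous_on)
  obtain M where M: "M \<ge> 0" "\<And>y. y \<in> {a..1} \<Longrightarrow> norm (w' y) \<le> M"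
    using continuous_on_compact_bound[OF compact_Icc w'c] by blast
  define C where "C = (\<bar>w 1\<bar> + \<bar>w a\<bar> + M)/8"
  show ?thesis
  proof (intro exI[of _ C] ballI)
    fix x :: real assume x: "x \<in> {0<..1}"
    then have x0: "x > 0" by auto
    define Q where "Q y = Pf (1/(x*y))" for y
    define Q' where "Q' y = (1/2 - frac (1/(x*y))) * (-1/(x*y^2))" for y
    define S where "S = {y \<in> {a..1}. 1/(x*y) \<in> \<int>}"
    have S: "finite S" unfolding S_def using finite_int_pts a x0 by blast
    have Qc: "continuous_on {a..1} Q"
    proof -
      have "continuous_on {a..1} (\<lambda>y. 1/(x*y))" using a x0 by (intro continuous_intros) auto
      then show ?thesis unfolding Q_def
        using continuous_on_compose2[OF continuous_at_imp_continuous_on[OF ballI[OF Pf_cont]] _ subset_UNIV] by blast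
    qed
    have Qd: "(Q has_vector_derivative Q' y) (at y)" if y: "y \<in> {a<..<1} - S" for y
    proof -
      have y0: "y > 0" using y a by auto
      have ni: "1/(x*y) \<notin> \<int>" using y unfolding S_def by auto
      have "((\<lambda>y. 1/(x*y)) has_real_derivative (-1/(x*y^2))) (at y)"
        using y0 x0 by (auto intro!: derivative_eq_intros simp: power2_eq_square field_simps)
      from DERIV_chain2[OF Pf_deriv[OF ni] this] show ?thesis
        unfolding Q_def Q'_def has_real_derivative_iff_has_vector_derivative[symmetric] by simp
    qed
    have wd': "(w has_vector_derivative w' y) (at y)" for y
      using wd has_real_derivative_iff_has_vector_derivative by blast
    define I2 where "I2 = integral {a..1} (\<lambda>y. Q y * w' y)"
    have int2: "((\<lambda>y. Q y * w' y) has_integral I2) {a..1}"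
      unfolding I2_def by (intro integrable_integral integrable_continuous_interval continuous_intros Qc w'c)
    have ibp: "((\<lambda>y. Q' y * w y) has_integral (Q 1 * w 1 - Q a * w a - I2)) {a..1}"
      by (rule integration_by_parts_interior_strong[OF bounded_bilinear_mult S \<open>a \<le> 1\<close> Qc wc Qd wd']) (use int2 in auto)
    have eq: "(1/2 - frac (1/(x*y))) * p y = -x * (Q' y * w y)" if "y \<in> {a..1}" for y
    proof -
      have "y > 0" using that a by auto
      then show ?thesis using x0 unfolding Q'_def w_def by simp
    qed
    have "((\<lambda>y. (1/2 - frac (1/(x*y))) * p y) has_integral (-x * (Q 1 * w 1 - Q a * w a - I2))) {a..1}"
      by (rule has_integral_eq[OF eq[symmetric] has_integral_cmult_real[OF ibp]])
    then have ieq: "integral {a..1} (\<lambda>y. (1/2 - frac (1/(x*y))) * p y) = -x * (Q 1 * w 1 - Q a * w a - I2)"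
      by (rule integral_unique)
    have "norm I2 \<le> integral {a..1} (\<lambda>y. M/8)"
      unfolding I2_def
    proof (rule integral_norm_bound_integral)
      show "(\<lambda>y. Q y * w' y) integrable_on {a..1}" using int2 by blast
      show "(\<lambda>y. M/8) integrable_on {a..1}" by (rule integrable_const_ivl)
      fix y assume "y \<in> {a..1}"
      then have "\<bar>w' y\<bar> \<le> M" using M by auto
      moreover have "\<bar>Q y\<bar> \<le> 1/8" unfolding Q_def by (rule Pf_bound)
      ultimately show "norm (Q y * w' y) \<le> M/8"
        unfolding real_norm_def abs_mult using mult_mono[of "\<bar>Q y\<bar>" "1/8" "\<bar>w' y\<bar>" M] by simp
    qed
    also have "\<dots> = (1 - a) * (M/8)" using a by simp
    also have "\<dots> \<le> M/8" using a M by (simp add: mult_left_le_one_le)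
    finally have I2b' : "norm I2 \<le> M/8" .
    then have I2b: "\<bar>I2\<bar> \<le> M/8" by simp
    have "\<bar>Q 1 * w 1 - Q a * w a - I2\<bar> \<le> \<bar>Q 1\<bar> * \<bar>w 1\<bar> + \<bar>Q a\<bar> * \<bar>w a\<bar> + \<bar>I2\<bar>"
      by (simp add: abs_mult[symmetric]) 
    also have "\<dots> \<le> 1/8 * \<bar>w 1\<bar> + 1/8 * \<bar>w a\<bar> + M/8"
      using Pf_bound I2b unfolding Q_def by (intro add_mono mult_right_mono) auto
    finally have "\<bar>Q 1 * w 1 - Q a * w a - I2\<bar> \<le> C" unfolding C_def by simp
    then show "\<bar>integral {a..1} (\<lambda>y. (1/2 - frac (1/(x*y))) * p y)\<bar> \<le> x * C"
      unfolding ieq using x0 by (simp add: abs_mult)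
  qed
qed

lemma abs_le_sq1: "\<bar>t::real\<bar> \<le> t^2 + 1"
proof (cases "\<bar>t\<bar> \<le> 1")
  case True then show ?thesis by (smt (verit) zero_le_power2)
next
  case False
  then have "\<bar>t\<bar> * 1 \<le> \<bar>t\<bar> * \<bar>t\<bar>" by (intro mult_left_mono) auto
  then show ?thesis by (simp add: power2_eq_square abs_mult[symmetric])
qed

lemma Kker_bound: "\<bar>Kker x y\<bar> \<le> 1/2"
  unfolding Kker_def using frac_ge_0[of "1/(x*y)"] frac_lt_1[of "1/(x*y)"] by (auto simp: abs_if)

lemma Kker_meas: "(\<lambda>y. Kker x y) \<in> borel_measurable (lebesgue_on S)"
proof -
  have "(\<lambda>y. Kker x y) \<in> borel_measurable borel"
  proof -
    have [measurable]: "Measurable.pred borel (\<lambda>y::real. x = 0 \<or> y = 0)"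
      by (cases "x = 0") (simp_all add: Measurable.pred_def borel_closed)
    show ?thesis unfolding Kker_def frac_def by measurable
  qed
  from measurable_compose[OF id_borel_measurable_lebesgue_on this] show ?thesis by (simp add: o_def)
qed

lemma Kker_bounded: "bounded ((\<lambda>y. Kker x y) ` S)"
  using Kker_bound unfolding bounded_iff by (metis imageE real_norm_def)

lemma phi_int:
  assumes "L2_01 phi" shows "phi absolutely_integrable_on {0..1}"
proof -
  have m: "set_borel_measurable lebesgue {0..1} phi" and i: "set_integrable lebesgue {0..1} (\<lambda>x. (phi x)^2)"
    using assms unfolding L2_01_def by auto
  have i1: "set_integrable lebesgue {0..1} (\<lambda>x. (phi x)^2 + 1)"
    using i by (intro set_integral_add) (auto simp: set_integrable_def integrable_indicator_iff)
  show ?thesis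
    unfolding set_integrable_def
  proof (rule Bochner_Integration.integrable_bound[OF i1[unfolded set_integrable_def]])
    show "(\<lambda>x. indicat_real {0..1} x *\<^sub>R phi x) \<in> borel_measurable lebesgue" using m by (simp add: set_borel_measurable_def)
    show "AE x in lebesgue. norm (indicat_real {0..1} x *\<^sub>R phi x) \<le> norm (indicat_real {0..1} x *\<^sub>R ((phi x)\<^sup>2 + 1))"
    proof (rule AE_I2)
      fix x
      have "\<bar>phi x\<bar> \<le> (phi x)^2 + 1" by (rule abs_le_sq1)
      then show "norm (indicat_real {0..1} x *\<^sub>R phi x) \<le> norm (indicat_real {0..1} x *\<^sub>R ((phi x)\<^sup>2 + 1))"
        by (auto simp: indicator_def)
    qed
  qed
qed

lemma Kphi_int:
  assumes "phi absolutely_integrable_on S" "S \<in> sets lebesgue"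
  shows "(\<lambda>y. Kker x y * phi y) absolutely_integrable_on S"
  by (rule absolutely_integrable_bounded_measurable_product_real[OF Kker_meas assms(2) Kker_bounded assms(1)])


lemma countable_E:
  fixes x0 :: real
  assumes x0: "x0 \<noteq> 0"
  shows "negligible {y. y \<noteq> 0 \<and> 1/(x0*y) \<in> \<int>}"
proof -
  have sub: "{y. y \<noteq> 0 \<and> 1/(x0*y) \<in> \<int>} \<subseteq> range (\<lambda>n::int. 1/(x0 * of_int n))"
  proof
    fix y assume y: "y \<in> {y. y \<noteq> 0 \<and> 1/(x0*y) \<in> \<int>}"
    then obtain n where n: "1/(x0*y) = of_int n" by (auto elim: Ints_cases)
    have "1/(x0 * of_int n) = 1/(x0 * (1/(x0*y)))" by (simp add: n)
    also have "\<dots> = y" using y x0 by auto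
    finally show "y \<in> range (\<lambda>n::int. 1/(x0 * of_int n))" by (metis rangeI)
  qed
  have c: "countable {y. y \<noteq> 0 \<and> 1/(x0*y) \<in> \<int>}"
    by (rule countable_subset[OF sub]) simp
  have "{y. y \<noteq> 0 \<and> 1/(x0*y) \<in> \<int>} = \<Union>((\<lambda>y. {y}) ` {y. y \<noteq> 0 \<and> 1/(x0*y) \<in> \<int>})" by auto
  also have "negligible \<dots>"
    using c by (intro negligible_countable_Union) auto
  finally show ?thesis .
qed

theorem theorem2p10:
  fixes phi :: "real \<Rightarrow> real" and lam :: real
  assumes "eigenfunction_K phi lam"
  shows "continuous_on {0..1} phi"
proof -
  have L2: "L2_01 phi" and eig: "\<And>x. x \<in> {0..1} \<Longrightarrow> phi x = lam * (LINT y:{0..1}|lebesgue. Kker x y * phi y)"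
    using assms unfolding eigenfunction_K_def by auto
  have phiI: "phi absolutely_integrable_on {0..1}" using phi_int[OF L2] .
  have phiI': "phi integrable_on {0..1}" and nphiI: "(\<lambda>y. norm (phi y)) integrable_on {0..1}"
    using phiI absolutely_integrable_on_def by blast+
  define F where "F x = integral {0..1} (\<lambda>y. Kker x y * phi y)" for x
  have KI: "(\<lambda>y. Kker x y * phi y) absolutely_integrable_on {0..1}" for x
    using Kphi_int[OF phiI] by simp
  have KI': "(\<lambda>y. Kker x y * phi y) integrable_on {0..1}" for x
    using KI absolutely_integrable_on_def by blast
  have phiF: "phi x = lam * F x" if "x \<in> {0..1}" for x
    using eig[OF that] set_lebesgue_integral_eq_integral(2)[OF KI] unfolding F_def by simp
  have hI: "(\<lambda>y. \<bar>phi y\<bar> / 2) integrable_on {0..1}"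
    using nphiI by simp
  have Kle: "norm (Kker x y * phi y) \<le> \<bar>phi y\<bar> / 2" for x y
  proof -
    have "\<bar>Kker x y\<bar> * \<bar>phi y\<bar> \<le> (1/2) * \<bar>phi y\<bar>" using Kker_bound[of x y] by (intro mult_right_mono) auto
    then show ?thesis by (simp add: abs_mult)
  qed
  define A where "A = integral {0..1} (\<lambda>y. \<bar>phi y\<bar> / 2)"
  have FA: "\<bar>F x\<bar> \<le> A" for x
    unfolding F_def A_def using integral_norm_bound_integral[OF KI' hI Kle] by simp
  define B where "B = \<bar>lam\<bar> * A"
  have B: "\<bar>phi y\<bar> \<le> B" if "y \<in> {0..1}" for y
    unfolding phiF[OF that] B_def abs_mult using FA by (simp add: mult_left_mono)
  have B0: "B \<ge> 0" using B[of 0] by simp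
  have F0: "F 0 = 0" unfolding F_def Kker_def by simp

  have contA: "continuous (at x0 within {0..1}) F" if x0: "x0 \<in> {0<..1}" for x0
  proof (rule continuous_within_sequentiallyI)
    fix u :: "nat \<Rightarrow> real" assume u: "u \<longlonglongrightarrow> x0" "\<forall>n. u n \<in> {0..1}"
    define E where "E = {y. y \<noteq> 0 \<and> 1/(x0*y) \<in> \<int>}"
    have En: "negligible E" unfolding E_def by (rule countable_E) (use x0 in auto)
    define T where "T = {0..1} - E"
    have FT: "F v = integral T (\<lambda>y. Kker v y * phi y)" for v
      unfolding F_def T_def by (rule integral_spike_set) (auto intro: negligible_subset[OF En])
    have IT: "f integrable_on T" if "f integrable_on {0..1}" for f :: "real \<Rightarrow> real"
      using that unfolding T_def by (rule integrable_spike_set) (auto intro: negligible_subset[OF En])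
    have conv: "(\<lambda>k. Kker (u k) y * phi y) \<longlonglongrightarrow> Kker x0 y * phi y" if y: "y \<in> T" for y
    proof (cases "y = 0")
      case True
      then show ?thesis unfolding Kker_def by simp
    next
      case False
      then have yp: "y > 0" using y unfolding T_def by auto
      have ni: "1/(x0*y) \<notin> \<int>" using y False unfolding T_def E_def by auto
      define g where "g z = 1/2 - frac (1/(z*y))" for z
      have "isCont (\<lambda>z. 1/(z*y)) x0" using x0 yp by (intro continuous_intros) auto
      moreover have "isCont frac (1/(x0*y))" using continuous_frac[OF ni] by simp
      ultimately have "isCont (\<lambda>z. frac (1/(z*y))) x0" by (rule isCont_o2)
      then have gc: "isCont g x0" unfolding g_def by (intro continuous_intros)
      have gl: "(\<lambda>k. g (u k)) \<longlonglongrightarrow> g x0" by (rule isCont_tendsto_compose[OF gc u(1)])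
      have "\<forall>\<^sub>F k in sequentially. u k > 0" using order_tendstoD(1)[OF u(1)] x0 by auto
      then have ev: "\<forall>\<^sub>F k in sequentially. g (u k) = Kker (u k) y"
        by eventually_elim (use yp in \<open>auto simp: g_def Kker_def\<close>)
      have "Kker x0 y = g x0" unfolding g_def Kker_def using x0 yp by auto
      then have "(\<lambda>k. Kker (u k) y) \<longlonglongrightarrow> Kker x0 y" using Lim_transform_eventually[OF gl ev] by simp
      then show ?thesis by (intro tendsto_mult_right)
    qed
    have "(\<lambda>k. integral T (\<lambda>y. Kker (u k) y * phi y)) \<longlonglongrightarrow> integral T (\<lambda>y. Kker x0 y * phi y)"
      by (rule dominated_convergence(2)[OF IT[OF KI'] IT[OF hI] Kle conv])
    then show "(\<lambda>n. F (u n)) \<longlonglongrightarrow> F x0" unfolding FT .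
  qed

  have small: "\<exists>d>0. \<forall>x\<in>{0..1}. x < d \<longrightarrow> \<bar>F x\<bar> < e" if e: "e > 0" for e
  proof -
    define a where "a = min (1/2) (e / (3 * (B + 1)))"
    have a01: "0 < a" unfolding a_def using e B0 by simp
    have a02: "a \<le> 1/2" unfolding a_def by (rule min.cobounded1)
    note a0 = a01 a02
    have aB: "a * B < e / 3"
    proof -
      have "a * B \<le> (e / (3 * (B + 1))) * B" unfolding a_def using B0 by (intro mult_right_mono) auto
      also have "\<dots> < e / 3" using e B0 by (simp add: field_simps)
      finally show ?thesis .
    qed
    have Fc: "continuous_on {a..1} F"
      unfolding continuous_on_eq_continuous_within
    proof
      fix x assume "x \<in> {a..1}"
      then have "x \<in> {0<..1}" using a0 by auto
      from contA[OF this] show "continuous (at x within {a..1}) F"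
        by (rule continuous_within_subset) (use a0 in auto)
    qed
    have phic: "continuous_on {a..1} phi"
    proof -
      have "continuous_on {a..1} (\<lambda>x. lam * F x)" by (intro continuous_intros Fc)
      then show ?thesis by (rule continuous_on_cong[THEN iffD1, rotated 2]) (use a0 phiF in auto)
    qed
    obtain g where g: "real_polynomial_function g" "\<And>x. x \<in> {a..1} \<Longrightarrow> \<bar>phi x - g x\<bar> < e/3"
      using Stone_Weierstrass_real_polynomial_function[OF compact_Icc phic, of "e/3"] e by auto
    obtain g' where g': "real_polynomial_function g'" "\<And>x. (g has_real_derivative g' x) (at x)"
      using has_real_derivative_polynomial_function[OF g(1)] by blast
    have g'c: "continuous_on {a..1} g'"
      using g'(1) by (meson continuous_at_imp_continuous_on continuous_real_polymonial_function)
    have gc: "continuous_on {a..1} g"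
      using g(1) by (meson continuous_at_imp_continuous_on continuous_real_polymonial_function)
    obtain C where C: "\<forall>x\<in>{0<..1}. \<bar>integral {a..1} (\<lambda>y. (1/2 - frac (1/(x*y))) * g y)\<bar> \<le> x * C"
      using RL[OF g'(2) g'c a0(1)] a0 by auto
    define d where "d = min 1 (e / (3 * (\<bar>C\<bar> + 1)))"
    have d0: "d > 0" unfolding d_def using e by auto
    show ?thesis
    proof (intro exI[of _ d] conjI d0 ballI impI)
      fix x assume x: "x \<in> {0..1}" "x < d"
      show "\<bar>F x\<bar> < e"
      proof (cases "x = 0")
        case True then show ?thesis using F0 e by simp
      next
        case False
        then have xp: "x > 0" "x \<le> 1" using x by auto
        define f where "f y = Kker x y * phi y" for y
        have fI: "f integrable_on {0..1}" unfolding f_def by (rule KI')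
        have split: "F x = integral {0..a} f + integral {a..1} f"
          unfolding F_def f_def[symmetric] using Henstock_Kurzweil_Integration.integral_combine[OF _ _ fI, of a] a0 by simp
        have b1: "\<bar>integral {0..a} f\<bar> \<le> a * (B/2)"
        proof -
          have "norm (integral {0..a} f) \<le> integral {0..a} (\<lambda>y. B/2)"
          proof (rule integral_norm_bound_integral)
            show "f integrable_on {0..a}" using integrable_subinterval_real[OF fI] a0 by simp
            show "(\<lambda>y. B/2) integrable_on {0..a}" by (rule integrable_const_ivl)
            fix y assume y: "y \<in> {0..a}"
            then have "\<bar>phi y\<bar> \<le> B" using B a0 by auto
            then show "norm (f y) \<le> B/2" unfolding f_def using Kle[of x y] by simp
          qed
          then show ?thesis using a0 by simp
        qed
        define gI where "gI y = Kker x y * g y" for y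
        have gII: "gI integrable_on {a..1}"
          unfolding gI_def using Kphi_int[OF absolutely_integrable_continuous_real[OF gc]]
          by (simp add: absolutely_integrable_on_def)
        have fI2: "f integrable_on {a..1}" using integrable_subinterval_real[OF fI] a0 by simp
        have dI: "(\<lambda>y. f y - gI y) integrable_on {a..1}" by (rule integrable_diff[OF fI2 gII])
        have split2: "integral {a..1} f = integral {a..1} (\<lambda>y. f y - gI y) + integral {a..1} gI"
          using integral_add[OF dI gII] by simp
        have b2: "\<bar>integral {a..1} (\<lambda>y. f y - gI y)\<bar> \<le> e/6"
        proof -
          have "norm (integral {a..1} (\<lambda>y. f y - gI y)) \<le> integral {a..1} (\<lambda>y. e/6)"
          proof (rule integral_norm_bound_integral[OF dI])
            show "(\<lambda>y. e/6) integrable_on {a..1}" by (rule integrable_const_ivl)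
            fix y assume y: "y \<in> {a..1}"
            have "f y - gI y = Kker x y * (phi y - g y)" unfolding f_def gI_def by (simp add: algebra_simps)
            moreover have "\<bar>Kker x y * (phi y - g y)\<bar> \<le> (1/2) * (e/3)"
              unfolding abs_mult using Kker_bound[of x y] g(2)[OF y] by (intro mult_mono) auto
            ultimately show "norm (f y - gI y) \<le> e/6" by simp
          qed
          also have "\<dots> = (1 - a) * (e/6)" using a0 by simp
          also have "\<dots> \<le> e/6" using a0 e by (simp add: mult_left_le_one_le)
          finally show ?thesis by simp
        qed
        have b3: "\<bar>integral {a..1} gI\<bar> < e/3"
        proof -
          have "integral {a..1} gI = integral {a..1} (\<lambda>y. (1/2 - frac (1/(x*y))) * g y)"
            by (rule integral_cong) (use a0 xp in \<open>auto simp: gI_def Kker_def\<close>)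
          then have "\<bar>integral {a..1} gI\<bar> \<le> x * C" using C xp by simp
          also have "\<dots> \<le> x * \<bar>C\<bar>" using xp by (simp add: mult_left_mono)
          also have "\<dots> < e/3"
          proof -
            have "x < e / (3 * (\<bar>C\<bar> + 1))" using x(2) unfolding d_def by simp
            then have "x * (\<bar>C\<bar> + 1) < e/3" by (simp add: field_simps)
            moreover have "x * \<bar>C\<bar> \<le> x * (\<bar>C\<bar> + 1)" using xp by simp
            ultimately show ?thesis by linarith
          qed
          finally show ?thesis .
        qed
        have "\<bar>F x\<bar> \<le> \<bar>integral {0..a} f\<bar> + \<bar>integral {a..1} (\<lambda>y. f y - gI y)\<bar> + \<bar>integral {a..1} gI\<bar>"
          unfolding split split2 by linarith
        also have "\<dots> < e" using b1 b2 b3 aB by linarith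
        finally show ?thesis .
      qed
    qed
  qed
  have cont0: "continuous (at 0 within {0..1}) F"
  proof (rule continuous_within_sequentiallyI)
    fix u :: "nat \<Rightarrow> real" assume u: "u \<longlonglongrightarrow> 0" "\<forall>n. u n \<in> {0..1}"
    show "(\<lambda>n. F (u n)) \<longlonglongrightarrow> F 0"
      unfolding F0
    proof (rule LIMSEQ_I)
      fix r :: real assume r: "r > 0"
      obtain d where d: "d > 0" "\<And>x. x \<in> {0..1} \<Longrightarrow> x < d \<Longrightarrow> \<bar>F x\<bar> < r" using small[OF r] by blast
      obtain N where N: "\<And>n. n \<ge> N \<Longrightarrow> norm (u n - 0) < d" using LIMSEQ_D[OF u(1) d(1)] by blast
      show "\<exists>N. \<forall>n\<ge>N. norm (F (u n) - 0) < r"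
      proof (intro exI allI impI)
        fix n assume "n \<ge> N"
        then have "\<bar>u n\<bar> < d" using N by simp
        then show "norm (F (u n) - 0) < r" using d(2)[of "u n"] u(2) by auto
      qed
    qed
  qed
  have Fcont: "continuous_on {0..1} F"
    unfolding continuous_on_eq_continuous_within
  proof
    fix x :: real assume x: "x \<in> {0..1}"
    show "continuous (at x within {0..1}) F"
    proof (cases "x = 0")
      case True then show ?thesis using cont0 by simp
    next
      case False then show ?thesis using contA x by auto
    qed
  qed
  have "continuous_on {0..1} (\<lambda>x. lam * F x)" by (intro continuous_intros Fcont)
  then show ?thesis by (rule continuous_on_cong[THEN iffD1, rotated 2]) (use phiF in auto)
qed


end
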